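(* Fix $\gamma\in(0,1]$ and $0<\alpha<0.25$, and let $\xi>0$ be arbitrarily small. Then for all sufficiently large $N$ and all $i,j\in\{1,\dots,b\}$, $$\big|[J(s^* )]^{-1}_{ij}\big|\le\frac{12}{\gamma}N^{2\alpha+2\xi}.$$
   Context: Let $N\ge1$, $\lambda=1-\gamma/N^\alpha$, and $b=b(N)\ge1$ an integer with $b=O(\log N)$. The mean-field vector field is $f_k(s)=\lambda(s_{k-1}^2-s_k^2)-(s_k-s_{k+1})$, $k=1,\dots,b$, with $s_0=1,s_{b+1}=0$; $s^*$ is its unique equilibrium in $\{s\in\mathbb R^b:1\ge s_1\ge\cdots\ge s_b\ge0\}$. $J(s^* )$ is the Jacobian of $f$ at $s^*$: the $b\times b$ tridiagonal matrix with $J_{kk}=-2\lambda s^*_k-1$, $J_{k,k+1}=1$, $J_{k+1,k}=2\lambda s^*_k$. Both $s^*$ and $J(s^* )$ depend on $N$. *)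

theory Defs
  imports Complex_Main "HOL-Library.Landau_Symbols" "Jordan_Normal_Form.Matrix"
begin

text \<open>Vectors s in R^b are functions nat => real indexed by 1..b (value 0 outside).
  Extension with boundary values s_0 = 1 and s_(b+1) = 0.\<close>
definition sext :: "nat \<Rightarrow> (nat \<Rightarrow> real) \<Rightarrow> nat \<Rightarrow> real" where
  "sext b s k = (if k = 0 then 1 else if k \<le> b then s k else 0)"

definition mf :: "real \<Rightarrow> nat \<Rightarrow> (nat \<Rightarrow> real) \<Rightarrow> nat \<Rightarrow> real" where
  "mf lam b s k = lam * ((sext b s (k - 1))\<^sup>2 - (sext b s k)\<^sup>2) - (sext b s k - sext b s (k + 1))"

definition is_equil :: "real \<Rightarrow> nat \<Rightarrow> (nat \<Rightarrow> real) \<Rightarrow> bool" where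
  "is_equil lam b s \<longleftrightarrow>
     (\<forall>k\<in>{1..b}. mf lam b s k = 0) \<and> (\<forall>k. k \<notin> {1..b} \<longrightarrow> s k = 0) \<and>
     s 1 \<le> 1 \<and> (\<forall>k\<in>{1..<b}. s (k + 1) \<le> s k) \<and> 0 \<le> s b"

definition sstar :: "real \<Rightarrow> nat \<Rightarrow> nat \<Rightarrow> real" where
  "sstar lam b = (THE s. is_equil lam b s)"

text \<open>Jacobian J(s*) as a b x b matrix; row/column i (0-based) corresponds to index i+1.\<close>
definition Jac :: "real \<Rightarrow> nat \<Rightarrow> real mat" where
  "Jac lam b = mat b b (\<lambda>(i, j).
     if j = i then - 2 * lam * sstar lam b (i + 1) - 1
     else if j = i + 1 then 1
     else if i = j + 1 then 2 * lam * sstar lam b (j + 1)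
     else 0)"

end

theory Submission
  imports Defs "Jordan_Normal_Form.Determinant" "HOL-Real_Asymp.Real_Asymp"
begin

fun sq :: "real \<Rightarrow> real \<Rightarrow> nat \<Rightarrow> real" where
  "sq lam x 0 = 1" | "sq lam x (Suc j) = lam * ((sq lam x j)\<^sup>2 - x\<^sup>2)"

fun mn :: "real \<Rightarrow> real \<Rightarrow> nat \<Rightarrow> real" where
  "mn lam x 0 = 1" | "mn lam x (Suc j) = min (mn lam x j) (sq lam x (Suc j))"

lemma equil_T:
  assumes E: "is_equil lam b s" and j: "1 \<le> j" "j \<le> b"
  shows "s j = lam * ((sext b s (j - 1))\<^sup>2 - (s b)\<^sup>2)"
  using j(2,1)
proof (induction j rule: inc_induct)
  case base
  have "mf lam b s b = 0" using E base unfolding is_equil_def by auto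
  then show ?case using base unfolding mf_def sext_def by (auto simp: algebra_simps)
next
  case (step n)
  have "mf lam b s n = 0" using E step unfolding is_equil_def by auto
  moreover have "s (Suc n) = lam * ((sext b s n)\<^sup>2 - (s b)\<^sup>2)" using step by auto
  ultimately show ?case using step unfolding mf_def sext_def by (auto simp: algebra_simps)
qed

lemma equil_sq:
  assumes E: "is_equil lam b s" and j: "j \<le> b"
  shows "sext b s j = sq lam (s b) j"
  using j
proof (induction j)
  case 0 then show ?case by (simp add: sext_def)
next
  case (Suc j)
  have "s (Suc j) = lam * ((sext b s j)\<^sup>2 - (s b)\<^sup>2)" using equil_T[OF E, of "Suc j"] Suc by auto
  then show ?case using Suc by (simp add: sext_def)
qed

lemma equil_nonneg:
  assumes E: "is_equil lam b s"
  shows "0 \<le> s j"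
proof (cases "j \<in> {1..b}")
  case False then show ?thesis using E unfolding is_equil_def by auto
next
  case True
  have "\<forall>j. 1 \<le> j \<longrightarrow> j \<le> b \<longrightarrow> 0 \<le> s j"
  proof (intro allI impI)
    fix j assume "1 \<le> j" "j \<le> b"
    show "0 \<le> s j" using \<open>j \<le> b\<close> \<open>1 \<le> j\<close>
    proof (induction j rule: inc_induct)
      case base then show ?case using E unfolding is_equil_def by auto
    next
      case (step n)
      then have "s (Suc n) \<le> s n" using E unfolding is_equil_def by auto
      then show ?case using step by auto
    qed
  qed
  then show ?thesis using True by auto
qed

lemma sq_strict:
  assumes lam: "0 < lam" and xy: "0 \<le> x" "x < y"
    and ny: "\<forall>j. 1 \<le> j \<longrightarrow> j < b \<longrightarrow> 0 \<le> sq lam y j"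
  shows "1 \<le> j \<Longrightarrow> j \<le> b \<Longrightarrow> sq lam y j < sq lam x j"
proof (induction j)
  case 0 then show ?case by simp
next
  case (Suc j)
  show ?case
  proof (cases "j = 0")
    case True
    have "x\<^sup>2 < y\<^sup>2" using xy by (simp add: power_strict_mono)
    then show ?thesis using True lam by simp
  next
    case False
    then have h: "sq lam y j < sq lam x j" "0 \<le> sq lam y j" using Suc ny by auto
    have "(sq lam y j)\<^sup>2 < (sq lam x j)\<^sup>2" using h by (simp add: power_strict_mono)
    moreover have "x\<^sup>2 < y\<^sup>2" using xy by (simp add: power_strict_mono)
    ultimately show ?thesis using lam by simp
  qed
qed

lemma equil_unique:
  assumes lam: "0 < lam" and b: "1 \<le> b" and E1: "is_equil lam b s" and E2: "is_equil lam b t"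
  shows "s = t"
proof -
  have s_sq: "s j = sq lam (s b) j" if "1 \<le> j" "j \<le> b" for j
    using equil_sq[OF E1 that(2)] that by (auto simp: sext_def)
  have t_sq: "t j = sq lam (t b) j" if "1 \<le> j" "j \<le> b" for j
    using equil_sq[OF E2 that(2)] that by (auto simp: sext_def)
  have xy: "s b = t b"
  proof (rule ccontr)
    assume ne: "s b \<noteq> t b"
    show False
    proof (cases "s b < t b")
      case True
      have "sq lam (t b) b < sq lam (s b) b"
      proof (rule sq_strict[OF lam _ True])
        show "0 \<le> s b" using equil_nonneg[OF E1] .
        show "\<forall>j. 1 \<le> j \<longrightarrow> j < b \<longrightarrow> 0 \<le> sq lam (t b) j"
          using equil_nonneg[OF E2] t_sq by (metis less_imp_le)
      qed (use b in auto)
      then show False using s_sq[of b] t_sq[of b] b True by simp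
    next
      case False
      then have F: "t b < s b" using ne by auto
      have "sq lam (s b) b < sq lam (t b) b"
      proof (rule sq_strict[OF lam _ F])
        show "0 \<le> t b" using equil_nonneg[OF E2] .
        show "\<forall>j. 1 \<le> j \<longrightarrow> j < b \<longrightarrow> 0 \<le> sq lam (s b) j"
          using equil_nonneg[OF E1] s_sq by (metis less_imp_le)
      qed (use b in auto)
      then show False using s_sq[of b] t_sq[of b] b F by simp
    qed
  qed
  show ?thesis
  proof
    fix j show "s j = t j"
    proof (cases "j \<in> {1..b}")
      case True then show ?thesis using s_sq[of j] t_sq[of j] xy by simp
    next
      case False then show ?thesis using E1 E2 unfolding is_equil_def by auto
    qed
  qed
qed


lemma sq_cont: "continuous_on UNIV (\<lambda>x. sq lam x j)"
  by (induction j) (auto intro!: continuous_intros)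

lemma mn_cont: "continuous_on UNIV (\<lambda>x. mn lam x j)"
proof (induction j)
  case 0 then show ?case by auto
next
  case (Suc j)
  have "continuous_on UNIV (\<lambda>x. min (mn lam x j) (sq lam x (Suc j)))"
    using Suc sq_cont[of lam "Suc j"] by (intro continuous_on_min) auto
  then show ?case by simp
qed

lemma mn_le: "i \<le> j \<Longrightarrow> mn lam x j \<le> sq lam x i"
proof (induction j)
  case 0 then show ?case by simp
next
  case (Suc j) then show ?case by (cases "i = Suc j") auto
qed

lemma mn_ex: "\<exists>i\<le>j. mn lam x j = sq lam x i"
proof (induction j)
  case 0 then show ?case by simp
next
  case (Suc j)
  then obtain i where "i \<le> j" "mn lam x j = sq lam x i" by auto
  then show ?case by (cases "mn lam x j \<le> sq lam x (Suc j)") (auto simp: min_def intro: le_SucI)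
qed

lemma sq0_pos: "0 < lam \<Longrightarrow> 0 < sq lam 0 j"
  by (induction j) auto

lemma sq_abs: "0 \<le> lam \<Longrightarrow> lam \<le> 1 \<Longrightarrow> \<bar>x\<bar> \<le> 1 \<Longrightarrow> \<bar>sq lam x j\<bar> \<le> 1"
proof (induction j)
  case 0 then show ?case by simp
next
  case (Suc j)
  let ?p = "sq lam x j"
  have p2: "?p\<^sup>2 \<le> 1" using Suc by (simp add: abs_square_le_1)
  have x2: "x\<^sup>2 \<le> 1" using Suc by (simp add: abs_square_le_1)
  have "0 \<le> ?p\<^sup>2" "0 \<le> x\<^sup>2" by auto
  then have "\<bar>?p\<^sup>2 - x\<^sup>2\<bar> \<le> 1" using p2 x2 by linarith
  then have "\<bar>lam * (?p\<^sup>2 - x\<^sup>2)\<bar> \<le> 1 * 1"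
    unfolding abs_mult using Suc by (intro mult_mono) auto
  then show ?case by simp
qed

definition sconst :: "real \<Rightarrow> nat \<Rightarrow> real \<Rightarrow> nat \<Rightarrow> real" where
  "sconst lam b x k = (if 1 \<le> k \<and> k \<le> b then sq lam x k else 0)"

lemma exists_equil:
  assumes lam: "0 < lam" "lam < 1" and b: "1 \<le> b"
  shows "\<exists>x. 0 < x \<and> x \<le> 1 \<and> sq lam x b = x \<and> (\<forall>j\<le>b. x \<le> sq lam x j) \<and> is_equil lam b (sconst lam b x)"
proof -
  define f where "f x = mn lam x b - x" for x
  have f0: "0 < f 0"
    using mn_ex[where lam=lam and x=0 and j=b] sq0_pos[OF lam(1)] unfolding f_def by force
  have "mn lam 1 b \<le> sq lam 1 1" using mn_le[OF b] .
  then have f1: "f 1 \<le> 0" unfolding f_def by simp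
  have cont: "\<forall>x. 0 \<le> x \<and> x \<le> 1 \<longrightarrow> isCont f x"
    unfolding f_def using mn_cont[of lam b]
    by (auto intro!: continuous_intros simp: continuous_on_eq_continuous_at)
  obtain x where x: "0 \<le> x" "x \<le> 1" "f x = 0" using IVT2[of f 1 0 0, OF f1 less_imp_le[OF f0] _ cont] by auto
  have x0: "x \<noteq> 0" using x f0 by auto
  then have xpos: "0 < x" using x by auto
  have mnx: "mn lam x b = x" using x unfolding f_def by simp
  have ge: "\<forall>j\<le>b. x \<le> sq lam x j" using mnx mn_le by metis
  obtain i where i: "i \<le> b" "sq lam x i = x" using mn_ex[where lam=lam and x=x and j=b] mnx by auto
  have ib: "i = b"
  proof (rule ccontr)
    assume "i \<noteq> b"
    then have "Suc i \<le> b" using i by auto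
    then have "x \<le> sq lam x (Suc i)" using ge by auto
    also have "sq lam x (Suc i) = 0" using i by simp
    finally show False using xpos by simp
  qed
  have sqb: "sq lam x b = x" using i ib by simp
  have abs1: "\<bar>sq lam x j\<bar> \<le> 1" for j using sq_abs[of lam x j] lam x by auto
  define s where "s = sconst lam b x"
  have sext_eq: "sext b s j = (if j \<le> b then sq lam x j else 0)" for j
    unfolding sext_def s_def sconst_def by auto
  have E: "is_equil lam b s"
    unfolding is_equil_def
  proof (intro conjI ballI allI impI)
    fix k assume k: "k \<in> {1..b}"
    show "mf lam b s k = 0"
    proof (cases "k = b")
      case True
      obtain m where m: "k = Suc m" using k by (cases k) auto
      have h: "lam * ((sq lam x m)\<^sup>2 - x\<^sup>2) = x" using sqb True m by (metis sq.simps(2))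
      have "b - Suc 0 = m" using True m by simp
      then show ?thesis unfolding mf_def sext_eq using True m sqb k h by (simp add: algebra_simps)
    next
      case False
      obtain m where m: "k = Suc m" using k by (cases k) auto
      have "Suc k \<le> b" using False k by auto
      then show ?thesis unfolding mf_def sext_eq using m k by (simp add: algebra_simps)
    qed
  next
    fix k assume "k \<notin> {1..b}" then show "s k = 0" unfolding s_def sconst_def by auto
  next
    have "lam * (1 - x\<^sup>2) \<le> 1 * 1" using lam x by (intro mult_mono) (auto simp: power_le_one)
    then show "s 1 \<le> 1" unfolding s_def sconst_def using b by simp
  next
    fix k assume k: "k \<in> {1..<b}"
    have "k \<le> b" using k by auto
    then have "x \<le> sq lam x k" using ge by blast
    then have pk1: "0 \<le> sq lam x k" using x by linarith
    have pk2: "sq lam x k \<le> 1" using abs1[of k] by linarith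
    note pk = pk1 pk2
    have "sq lam x (k+1) = lam * ((sq lam x k)\<^sup>2 - x\<^sup>2)" by simp
    also have "\<dots> \<le> 1 * ((sq lam x k)\<^sup>2)" using lam power_mono[OF \<open>x \<le> sq lam x k\<close>, of 2] x
      by (intro mult_mono) auto
    also have "\<dots> \<le> sq lam x k" using pk by (simp add: power2_eq_square mult_le_one mult_left_le)
    finally show "s (k + 1) \<le> s k" unfolding s_def sconst_def using k by auto
  next
    show "0 \<le> s b" unfolding s_def sconst_def using b sqb x by auto
  qed
  show ?thesis using xpos x sqb ge E s_def by auto
qed

lemma sstar_props:
  assumes lam: "0 < lam" "lam < 1" and b: "1 \<le> b"
  shows "\<forall>j. 0 \<le> sstar lam b j"
    and "\<forall>j. 1 \<le> j \<longrightarrow> j \<le> b \<longrightarrow> sstar lam b j \<le> lam"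
    and "\<forall>j. 1 \<le> j \<longrightarrow> j < b \<longrightarrow> sstar lam b (Suc j) \<le> lam * (sstar lam b j)\<^sup>2"
proof -
  obtain x where x: "0 < x" "x \<le> 1" "sq lam x b = x" "\<forall>j\<le>b. x \<le> sq lam x j"
    and E: "is_equil lam b (sconst lam b x)" using exists_equil[OF lam b] by blast
  have ss: "sstar lam b = sconst lam b x"
    unfolding sstar_def using E equil_unique[OF lam(1) b] by blast
  have abs1: "\<bar>sq lam x j\<bar> \<le> 1" for j using sq_abs[of lam x j] lam x by auto
  show "\<forall>j. 0 \<le> sstar lam b j" unfolding ss sconst_def using x by force
  show "\<forall>j. 1 \<le> j \<longrightarrow> j \<le> b \<longrightarrow> sstar lam b j \<le> lam"
  proof (intro allI impI)
    fix j assume j: "1 \<le> j" "j \<le> b"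
    then obtain m where m: "j = Suc m" by (cases j) auto
    have "(sq lam x m)\<^sup>2 \<le> 1" using abs1[of m] by (simp add: abs_square_le_1)
    moreover have "0 \<le> x\<^sup>2" by simp
    ultimately have "(sq lam x m)\<^sup>2 - x\<^sup>2 \<le> 1" by linarith
    then have "lam * ((sq lam x m)\<^sup>2 - x\<^sup>2) \<le> lam * 1" using lam
      by (intro mult_left_mono) auto
    then show "sstar lam b j \<le> lam" unfolding ss sconst_def using j m by simp
  qed
  show "\<forall>j. 1 \<le> j \<longrightarrow> j < b \<longrightarrow> sstar lam b (Suc j) \<le> lam * (sstar lam b j)\<^sup>2"
  proof (intro allI impI)
    fix j assume j: "1 \<le> j" "j < b"
    have "lam * ((sq lam x j)\<^sup>2 - x\<^sup>2) \<le> lam * (sq lam x j)\<^sup>2" using lam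
      by (intro mult_left_mono) auto
    then show "sstar lam b (Suc j) \<le> lam * (sstar lam b j)\<^sup>2" unfolding ss sconst_def using j by simp
  qed
qed


fun AA :: "(nat \<Rightarrow> real) \<Rightarrow> nat \<Rightarrow> real" where
  "AA a 0 = 0" | "AA a (Suc j) = a j * AA a j + 1"

fun BB :: "(nat \<Rightarrow> real) \<Rightarrow> (nat \<Rightarrow> real) \<Rightarrow> nat \<Rightarrow> real" where
  "BB a z 0 = 0" | "BB a z (Suc j) = a j * BB a z j + z (Suc j)"

lemma core:
  fixes lam Z :: real and b :: nat and s x y :: "nat \<Rightarrow> real"
  assumes lam: "0 < lam" "lam < 1" and b: "1 \<le> b"
    and s0: "\<forall>j. 0 \<le> s j"
    and s1: "\<forall>j. 1 \<le> j \<longrightarrow> j \<le> b \<longrightarrow> s j \<le> lam"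
    and s2: "\<forall>j. 1 \<le> j \<longrightarrow> j < b \<longrightarrow> s (Suc j) \<le> lam * (s j)\<^sup>2"
    and x0: "x 0 = 0" and xb: "x (Suc b) = 0"
    and eq: "\<forall>k. 1 \<le> k \<longrightarrow> k \<le> b \<longrightarrow>
       2 * lam * s (k - 1) * x (k - 1) - (2 * lam * s k + 1) * x k + x (Suc k) = y k"
    and Zb: "\<forall>j. 1 \<le> j \<longrightarrow> j \<le> b \<longrightarrow> \<bar>\<Sum>k\<in>{j..b}. y k\<bar> \<le> Z"
  shows "\<forall>j. 1 \<le> j \<longrightarrow> j \<le> b \<longrightarrow> \<bar>x j\<bar> \<le> 2 * Z * b / (1 - lam)"
proof -
  define a where "a j = 2 * lam * s j" for j
  define z where "z j = (\<Sum>k\<in>{j..b}. y k)" for j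
  define c where "c = a b * x b"
  have a0: "0 \<le> a j" for j unfolding a_def using s0 lam by auto
  have Z0: "0 \<le> Z" using Zb b by force
  have T: "a (j - 1) * x (j - 1) - x j - c = z j" if j: "1 \<le> j" "j \<le> b" for j
    using j(2,1)
  proof (induction j rule: inc_induct)
    case base
    have "z b = y b" unfolding z_def by simp
    then show ?case using eq b xb unfolding a_def c_def by (auto simp: algebra_simps)
  next
    case (step n)
    have "{n..b} = insert n {Suc n..b}" using step by auto
    then have "z n = y n + z (Suc n)" unfolding z_def by simp
    moreover have "a n * x n - x (Suc n) - c = z (Suc n)" using step by simp
    moreover have "a (n - 1) * x (n - 1) - (a n + 1) * x n + x (Suc n) = y n"
      using eq step unfolding a_def by (auto simp: algebra_simps)
    ultimately show ?case by (simp add: algebra_simps)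
  qed
  have xAB: "x j = - c * AA a j - BB a z j" if "j \<le> b" for j
    using that
  proof (induction j)
    case 0 then show ?case using x0 by simp
  next
    case (Suc j)
    have "a j * x j - x (Suc j) - c = z (Suc j)" using T[of "Suc j"] Suc by simp
    then show ?case using Suc by (simp add: algebra_simps)
  qed
  have A0: "0 \<le> AA a j" for j by (induction j) (auto simp: a0)
  have BA: "\<bar>BB a z j\<bar> \<le> Z * AA a j" if "j \<le> b" for j
    using that
  proof (induction j)
    case 0 then show ?case by simp
  next
    case (Suc j)
    have zz: "\<bar>z (Suc j)\<bar> \<le> Z" using Zb Suc unfolding z_def by auto
    have "\<bar>BB a z (Suc j)\<bar> \<le> a j * \<bar>BB a z j\<bar> + \<bar>z (Suc j)\<bar>"
      by (simp add: abs_mult a0 abs_triangle_ineq[THEN order_trans])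
    also have "\<dots> \<le> a j * (Z * AA a j) + Z"
      using Suc zz a0[of j] by (intro add_mono mult_left_mono) auto
    finally show ?case by (simp add: algebra_simps)
  qed
  have cZ: "\<bar>c\<bar> \<le> Z"
  proof -
    have "c = a b * (- c * AA a b - BB a z b)" using xAB[of b] unfolding c_def by simp
    then have "c * (1 + a b * AA a b) = - a b * BB a z b" by (simp add: algebra_simps)
    then have "\<bar>c\<bar> * (1 + a b * AA a b) = a b * \<bar>BB a z b\<bar>"
      using a0[of b] A0[of b] by (metis abs_minus abs_mult abs_of_nonneg mult_minus_left
            add_nonneg_nonneg zero_le_one mult_nonneg_nonneg)
    also have "\<dots> \<le> a b * (Z * AA a b)" using BA[of b] a0[of b] by (intro mult_left_mono) auto
    also have "\<dots> \<le> Z * (1 + a b * AA a b)" using Z0 by (simp add: algebra_simps)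
    finally have fin: "\<bar>c\<bar> * (1 + a b * AA a b) \<le> Z * (1 + a b * AA a b)" .
    have pos: "0 < 1 + a b * AA a b" using a0[of b] A0[of b] by (simp add: add_pos_nonneg)
    show ?thesis using fin pos by simp
  qed
  have key: "a j * (1 - s j) \<le> 1 - s (Suc j)" if "1 \<le> j" "j < b" for j
  proof -
    have "s (Suc j) \<le> lam * (s j)\<^sup>2" using s2 that by auto
    moreover have "0 \<le> (1 - lam * s j)\<^sup>2 + lam * (1 - lam) * (s j)\<^sup>2" using lam by auto
    ultimately show ?thesis unfolding a_def by (simp add: algebra_simps power2_eq_square)
  qed
  have Abound: "AA a j * (1 - lam) \<le> j * (1 - s j)" if "1 \<le> j" "j \<le> b" for j
    using that
  proof (induction j)
    case 0 then show ?case by simp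
  next
    case (Suc j)
    have e1: "1 - lam \<le> 1 - s (Suc j)" using s1 Suc.prems by auto
    show ?case
    proof (cases "j = 0")
      case True then show ?thesis using e1 by simp
    next
      case False
      have IH: "AA a j * (1 - lam) \<le> j * (1 - s j)" using Suc False by auto
      have "AA a (Suc j) * (1 - lam) = a j * (AA a j * (1 - lam)) + (1 - lam)" by (simp add: algebra_simps)
      also have "\<dots> \<le> a j * (j * (1 - s j)) + (1 - s (Suc j))"
        using IH e1 a0[of j] by (intro add_mono mult_left_mono) auto
      also have "\<dots> = j * (a j * (1 - s j)) + (1 - s (Suc j))" by simp
      also have "\<dots> \<le> j * (1 - s (Suc j)) + (1 - s (Suc j))"
        using key[of j] False Suc.prems by (intro add_mono mult_left_mono) auto
      finally show ?thesis by (simp add: algebra_simps)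
    qed
  qed
  show ?thesis
  proof (intro allI impI)
    fix j assume j: "1 \<le> j" "j \<le> b"
    have "AA a j * (1 - lam) \<le> real b * 1"
    proof -
      have "AA a j * (1 - lam) \<le> j * (1 - s j)" using Abound j by auto
      also have "\<dots> \<le> real b * 1" using j s0 s1 lam by (intro mult_mono) auto
      finally show ?thesis .
    qed
    then have Ab: "AA a j \<le> b / (1 - lam)" using lam by (simp add: field_simps)
    have "\<bar>x j\<bar> \<le> \<bar>c\<bar> * AA a j + \<bar>BB a z j\<bar>"
      using xAB[OF j(2)] A0[of j] by (simp add: abs_mult abs_triangle_ineq4[THEN order_trans])
    also have "\<dots> \<le> Z * AA a j + Z * AA a j"
      using cZ BA[OF j(2)] A0[of j] by (intro add_mono mult_right_mono) auto
    also have "\<dots> = 2 * Z * AA a j" by simp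
    also have "\<dots> \<le> 2 * Z * (b / (1 - lam))" using Ab Z0 by (intro mult_left_mono) auto
    finally show "\<bar>x j\<bar> \<le> 2 * Z * b / (1 - lam)" by simp
  qed
qed


lemma tri_sum:
  fixes f C :: "nat \<Rightarrow> real" and A B :: real
  assumes i: "i < b"
  shows "(\<Sum>m\<in>{0..<b}. (if m = i then A else if m = i + 1 then B else if i = m + 1 then C m else 0) * f m)
       = A * f i + (if i + 1 < b then B * f (i + 1) else 0) + (if 1 \<le> i then C (i - 1) * f (i - 1) else 0)"
proof -
  have "(\<Sum>m\<in>{0..<b}. (if m = i then A else if m = i + 1 then B else if i = m + 1 then C m else 0) * f m)
     = (\<Sum>m\<in>{0..<b}. (if m = i then A * f m else 0) + (if m = i + 1 then B * f m else 0)
          + (if m = i - 1 \<and> 1 \<le> i then C m * f m else 0))"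
    by (rule sum.cong) auto
  also have "\<dots> = (\<Sum>m\<in>{0..<b}. if m = i then A * f m else 0) + (\<Sum>m\<in>{0..<b}. if m = i + 1 then B * f m else 0)
          + (\<Sum>m\<in>{0..<b}. if m = i - 1 \<and> 1 \<le> i then C m * f m else 0)"
    by (simp add: sum.distrib)
  also have "(\<Sum>m\<in>{0..<b}. if m = i - 1 \<and> 1 \<le> i then C m * f m else 0)
      = (if 1 \<le> i then C (i - 1) * f (i - 1) else 0)"
  proof (cases "1 \<le> i")
    case True then show ?thesis using i by (simp add: sum.delta)
  next
    case False then show ?thesis by simp
  qed
  finally show ?thesis using i by (simp add: sum.delta)
qed

lemma Jac_row:
  assumes v: "v \<in> carrier_vec b" and k: "1 \<le> k" "k \<le> b"
  defines "x \<equiv> (\<lambda>k. if 1 \<le> k \<and> k \<le> b then v $ (k - 1) else 0)"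
  shows "(Jac lam b *\<^sub>v v) $ (k - 1) = 2 * lam * sstar lam b (k - 1) * x (k - 1)
           - (2 * lam * sstar lam b k + 1) * x k + x (Suc k)"
proof -
  let ?s = "sstar lam b"
  let ?i = "k - 1"
  have i: "?i < b" using k by auto
  have "(Jac lam b *\<^sub>v v) $ ?i = (\<Sum>m\<in>{0..<b}. (if m = ?i then - 2 * lam * ?s (?i + 1) - 1
       else if m = ?i + 1 then 1 else if ?i = m + 1 then 2 * lam * ?s (m + 1) else 0) * v $ m)"
    using i v unfolding Jac_def by (simp add: scalar_prod_def mult.commute del: One_nat_def)
  also have "\<dots> = (- 2 * lam * ?s (?i + 1) - 1) * v $ ?i + (if ?i + 1 < b then 1 * v $ (?i + 1) else 0)
       + (if 1 \<le> ?i then 2 * lam * ?s (?i - 1 + 1) * v $ (?i - 1) else 0)"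
    by (rule tri_sum[OF i])
  also have "\<dots> = 2 * lam * ?s (k - 1) * x (k - 1) - (2 * lam * ?s k + 1) * x k + x (Suc k)"
  proof -
    obtain i where ki: "k = Suc i" using k by (cases k) auto
    show ?thesis
    proof (cases i)
      case 0 then show ?thesis using k ki unfolding x_def by (auto simp: algebra_simps)
    next
      case (Suc m) then show ?thesis using k ki unfolding x_def by (auto simp: algebra_simps)
    qed
  qed
  finally show ?thesis .
qed


lemma Jac_carrier: "Jac lam b \<in> carrier_mat b b"
  unfolding Jac_def by simp

lemma solve_bound:
  assumes lam: "0 < lam" "lam < 1" and b: "1 \<le> b"
    and v: "v \<in> carrier_vec b"
    and yv: "\<forall>k. 1 \<le> k \<longrightarrow> k \<le> b \<longrightarrow> (Jac lam b *\<^sub>v v) $ (k - 1) = y k"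
    and Zb: "\<forall>j. 1 \<le> j \<longrightarrow> j \<le> b \<longrightarrow> \<bar>\<Sum>k\<in>{j..b}. y k\<bar> \<le> Z"
  shows "\<forall>i<b. \<bar>v $ i\<bar> \<le> 2 * Z * b / (1 - lam)"
proof -
  define x where "x = (\<lambda>k. if 1 \<le> k \<and> k \<le> b then v $ (k - 1) else 0)"
  note sp = sstar_props[OF lam b]
  have "\<forall>j. 1 \<le> j \<longrightarrow> j \<le> b \<longrightarrow> \<bar>x j\<bar> \<le> 2 * Z * b / (1 - lam)"
  proof (rule core[OF lam b sp(1) sp(2) sp(3), where y = y])
    show "x 0 = 0" unfolding x_def by simp
    show "x (Suc b) = 0" unfolding x_def by simp
    show "\<forall>k. 1 \<le> k \<longrightarrow> k \<le> b \<longrightarrow>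
       2 * lam * sstar lam b (k - 1) * x (k - 1) - (2 * lam * sstar lam b k + 1) * x k + x (Suc k) = y k"
    proof (intro allI impI)
      fix k assume k: "1 \<le> k" "k \<le> b"
      show "2 * lam * sstar lam b (k - 1) * x (k - 1) - (2 * lam * sstar lam b k + 1) * x k + x (Suc k) = y k"
        using Jac_row[OF v k, of lam] yv k unfolding x_def by simp
    qed
    show "\<forall>j. 1 \<le> j \<longrightarrow> j \<le> b \<longrightarrow> \<bar>\<Sum>k\<in>{j..b}. y k\<bar> \<le> Z" by fact
  qed
  then show ?thesis
  proof (intro allI impI)
    fix i assume "\<forall>j. 1 \<le> j \<longrightarrow> j \<le> b \<longrightarrow> \<bar>x j\<bar> \<le> 2 * Z * b / (1 - lam)" "i < b"
    then have "\<bar>x (Suc i)\<bar> \<le> 2 * Z * b / (1 - lam)" by auto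
    then show "\<bar>v $ i\<bar> \<le> 2 * Z * b / (1 - lam)" unfolding x_def using \<open>i < b\<close> by simp
  qed
qed

lemma inverse_bound:
  assumes lam: "0 < lam" "lam < 1" and b: "1 \<le> b"
  shows "\<exists>M \<in> carrier_mat b b. inverts_mat (Jac lam b) M \<and> inverts_mat M (Jac lam b) \<and>
           (\<forall>i < b. \<forall>j < b. \<bar>M $$ (i, j)\<bar> \<le> 2 * real b / (1 - lam))"
proof -
  let ?J = "Jac lam b"
  have J: "?J \<in> carrier_mat b b" by (rule Jac_carrier)
  have det: "det ?J \<noteq> 0"
  proof
    assume "det ?J = 0"
    then obtain v where v: "v \<in> carrier_vec b" "v \<noteq> 0\<^sub>v b" "?J *\<^sub>v v = 0\<^sub>v b"
      using det_0_iff_vec_prod_zero[OF J] by auto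
    have "\<forall>i<b. \<bar>v $ i\<bar> \<le> 2 * (0::real) * real b / (1 - lam)"
      by (rule solve_bound[OF lam b v(1), where y = "\<lambda>_. 0"]) (use v(3) in auto)
    then have "v = 0\<^sub>v b" using v(1) by (intro eq_vecI) auto
    then show False using v(2) by simp
  qed
  obtain M where MJ: "M * ?J = 1\<^sub>m b" and M: "M \<in> carrier_mat b b"
    using det_non_zero_imp_unit[OF J det, of "()"] unfolding Units_def ring_mat_def by auto
  have JM: "?J * M = 1\<^sub>m b" using mat_mult_left_right_inverse[OF M J MJ] .
  have bound: "\<bar>M $$ (i, l)\<bar> \<le> 2 * real b / (1 - lam)" if i: "i < b" and l: "l < b" for i l
  proof -
    let ?v = "col M l"
    have v: "?v \<in> carrier_vec b" using M by auto
    have Jv: "?J *\<^sub>v ?v = unit_vec b l"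
      using col_mult2[OF J M l] JM col_one[OF l] by metis
    have "\<forall>i<b. \<bar>?v $ i\<bar> \<le> 2 * (1::real) * real b / (1 - lam)"
    proof (rule solve_bound[OF lam b v, where y = "\<lambda>k. if k = l + 1 then 1 else 0"])
      show "\<forall>k. 1 \<le> k \<longrightarrow> k \<le> b \<longrightarrow> (?J *\<^sub>v ?v) $ (k - 1) = (if k = l + 1 then 1 else 0)"
        unfolding Jv using l by auto
      show "\<forall>j. 1 \<le> j \<longrightarrow> j \<le> b \<longrightarrow> \<bar>\<Sum>k\<in>{j..b}. (if k = l + 1 then 1 else 0 :: real)\<bar> \<le> 1"
        by (simp add: sum.delta)
    qed
    then show ?thesis using i l M by auto
  qed
  show ?thesis using M MJ JM bound J unfolding inverts_mat_def by auto
qed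


theorem lemma7:
  fixes \<gamma> \<alpha> \<xi> :: real and b :: "nat \<Rightarrow> nat"
  assumes "0 < \<gamma>" "\<gamma> \<le> 1" "0 < \<alpha>" "\<alpha> < 1/4" "0 < \<xi>"
    and "\<forall>N. 1 \<le> b N"
    and "(\<lambda>N. real (b N)) \<in> O(\<lambda>N. ln (real N))"
  shows "\<forall>\<^sub>F N in sequentially.
           (let lam = 1 - \<gamma> / real N powr \<alpha>; J = Jac lam (b N) in
            \<exists>M \<in> carrier_mat (b N) (b N). inverts_mat J M \<and> inverts_mat M J \<and>
              (\<forall>i < b N. \<forall>j < b N. \<bar>M $$ (i, j)\<bar> \<le> 12 / \<gamma> * real N powr (2 * \<alpha> + 2 * \<xi>)))"
proof -
  have lno: "(\<lambda>N::nat. ln (real N)) \<in> o(\<lambda>N. real N powr (\<alpha> + 2 * \<xi>))"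
    using assms(3,5) by real_asymp
  have bo: "(\<lambda>N. real (b N)) \<in> o(\<lambda>N. real N powr (\<alpha> + 2 * \<xi>))"
    using landau_o.big_small_trans[OF assms(7) lno] .
  have ev1: "\<forall>\<^sub>F N in sequentially. norm (real (b N)) \<le> 6 * norm (real N powr (\<alpha> + 2 * \<xi>))"
    using landau_o.smallD[OF bo, of 6] by simp
  have ev2: "\<forall>\<^sub>F N in sequentially. (2::nat) \<le> N" by (rule eventually_ge_at_top)
  show ?thesis
    using ev1 ev2
  proof eventually_elim
    case (elim N)
    define lam where "lam = 1 - \<gamma> / real N powr \<alpha>"
    have N2: "2 \<le> real N" using elim by simp
    have Npa: "1 < real N powr \<alpha>" using N2 assms(3) by (intro gr_one_powr) auto
    have q: "0 < \<gamma> / real N powr \<alpha>" using assms(1) Npa N2 by (intro divide_pos_pos) auto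
    have Np0: "0 < real N powr \<alpha>" using Npa by linarith
    have q1: "\<gamma> / real N powr \<alpha> < 1" using assms(1,2) Npa Np0 by (simp add: divide_less_eq)
    have lam: "0 < lam" "lam < 1" unfolding lam_def using q q1 by auto
    have bN: "1 \<le> b N" using assms(6) by auto
    obtain M where M: "M \<in> carrier_mat (b N) (b N)" "inverts_mat (Jac lam (b N)) M"
      "inverts_mat M (Jac lam (b N))"
      "\<forall>i < b N. \<forall>j < b N. \<bar>M $$ (i, j)\<bar> \<le> 2 * real (b N) / (1 - lam)"
      using inverse_bound[OF lam bN] by blast
    have bb: "real (b N) \<le> 6 * real N powr (\<alpha> + 2 * \<xi>)" using elim by simp
    have "2 * real (b N) / (1 - lam) = 2 / \<gamma> * real N powr \<alpha> * real (b N)"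
      unfolding lam_def using assms(1) Np0 by (simp add: field_simps)
    also have "\<dots> \<le> 2 / \<gamma> * real N powr \<alpha> * (6 * real N powr (\<alpha> + 2 * \<xi>))"
      using bb assms(1) by (intro mult_left_mono) auto
    also have "\<dots> = 12 / \<gamma> * real N powr (2 * \<alpha> + 2 * \<xi>)"
      using N2 by (simp add: powr_add[symmetric] field_simps)
    finally have "2 * real (b N) / (1 - lam) \<le> 12 / \<gamma> * real N powr (2 * \<alpha> + 2 * \<xi>)" .
    then show ?case unfolding Let_def lam_def[symmetric] using M by force
  qed
qed

end
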